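(* Let $\mathbb{A}\colon\mathbb{R}^d\to\mathbb{R}^d$ be Lipschitz continuous and monotone, $T>0$, $X_0\in\mathbb{R}^d$, and let $(X,Z)\in\mathcal{C}^1([0,T),\mathbb{R}^{2d})$ be the (unique) solution of \[ \dot X(t)=-Z(t)-\mathbb{A}(X(t)),\qquad \dot Z(t)=-\frac{1}{T-t}Z(t)-\frac{1}{T-t}\mathbb{A}(X(t)),\qquad X(0)=X_0,\ Z(0)=0. \] Then $\Psi(t)=\frac{1}{(T-t)^2}\|\dot X(t)\|^2$ is nonincreasing on $[0,T)$, and for all $t\in[0,T)$, \[ \|\dot Z(t)\|^2=\frac{1}{(T-t)^2}\|\dot X(t)\|^2\le\frac{1}{T^2}\|\mathbb{A}(X_0)\|^2. \]
   Context: Monotone: $\langle\mathbb{A}x-\mathbb{A}y,x-y\rangle\ge0$ for all $x,y$. *)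

theory Defs
  imports "HOL-Analysis.Analysis"
begin

definition monotone_op :: "('a::real_inner \<Rightarrow> 'a) \<Rightarrow> bool" where
  "monotone_op A \<longleftrightarrow> (\<forall>x y. inner (A x - A y) (x - y) \<ge> 0)"

end

theory Submission
  imports Defs
begin

lemma at_right_le: "0 \<le> r \<Longrightarrow> r < T \<Longrightarrow> at_right r \<le> at r within {0..<(T::real)}"
proof (rule filter_leI)
  fix P assume r: "0 \<le> r" "r < T" and ev: "eventually P (at r within {0..<T})"
  then have "eventually (\<lambda>x. x\<noteq>r \<longrightarrow> x\<in>{0..<T} \<longrightarrow> P x) (nhds r)" by (simp add: eventually_at_filter)
  moreover have "eventually (\<lambda>x. x < T) (nhds r)" using r eventually_nhds_in_open[of "{..<T}" r] by auto
  ultimately have "eventually (\<lambda>x. x\<noteq>r \<longrightarrow> x\<in>{r<..} \<longrightarrow> P x) (nhds r)"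
    by eventually_elim (use r in auto)
  then show "eventually P (at_right r)" by (simp add: eventually_at_filter)
qed

lemma dini_mono:
  fixes \<phi> :: "real \<Rightarrow> real"
  assumes ab: "a \<le> b" and cont: "continuous_on {a..b} \<phi>"
    and D: "\<forall>r\<in>{a..<b}. \<forall>\<epsilon>>0. eventually (\<lambda>x. \<phi> x \<le> \<phi> r + \<epsilon> * (x - r)) (at_right r)"
  shows "\<phi> b \<le> \<phi> a"
proof -
  have main: "\<phi> b \<le> \<phi> a + \<epsilon> * (b - a)" if e: "\<epsilon> > 0" for \<epsilon>
  proof -
    define g where "g x = \<phi> x - \<phi> a - \<epsilon> * (x - a)" for x
    have gc: "continuous_on {a..b} g" unfolding g_def by (intro continuous_intros cont)
    define S where "S = {c\<in>{a..b}. \<forall>x\<in>{a..c}. g x \<le> 0}"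
    have aS: "a \<in> S" using ab by (auto simp: S_def g_def)
    have bdd: "bdd_above S" unfolding S_def by (rule bdd_aboveI[of _ b]) auto
    define c where "c = Sup S"
    have ac: "a \<le> c" unfolding c_def using aS bdd by (rule cSup_upper)
    have cb: "c \<le> b" unfolding c_def using aS by (intro cSup_least) (auto simp: S_def)
    have below: "g x \<le> 0" if "x \<in> {a..<c}" for x
    proof -
      from that have "x < Sup S" by (simp add: c_def)
      then obtain s where "s \<in> S" "x < s" using aS bdd less_cSup_iff[of S x] by blast
      then show ?thesis using that by (auto simp: S_def)
    qed
    have K: "closed {x\<in>{a..b}. g x \<le> 0}"
      by (rule continuous_on_closed_Collect_le[OF gc continuous_on_const]) auto
    have gcle: "g c \<le> 0"
    proof (cases "a < c")
      case True
      have "{a..<c} \<subseteq> {x\<in>{a..b}. g x \<le> 0}" using below cb by auto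
      then have "closure {a..<c} \<subseteq> {x\<in>{a..b}. g x \<le> 0}" using K by (rule closure_minimal)
      then have "c \<in> {x\<in>{a..b}. g x \<le> 0}" using True by (metis atLeastAtMost_iff closure_atLeastLessThan order_less_imp_le order_refl subsetD)
      then show ?thesis by simp
    next
      case False then show ?thesis using ac by (auto simp: g_def)
    qed
    have cS: "c \<in> S" using below gcle ac cb by (auto simp: S_def) (metis atLeastLessThan_iff order_le_less)
    have "c = b"
    proof (rule ccontr)
      assume "c \<noteq> b" then have cb': "c < b" using cb by auto
      then have "eventually (\<lambda>x. \<phi> x \<le> \<phi> c + \<epsilon> * (x - c)) (at_right c)" using D ac e by auto
      then obtain d where d: "d > c" "\<forall>y>c. y < d \<longrightarrow> \<phi> y \<le> \<phi> c + \<epsilon> * (y - c)"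
        by (auto simp: eventually_at_right_field)
      define m where "m = min ((c + d)/2) b"
      have m: "c < m" "m \<le> b" "m < d" using d cb' by (auto simp: m_def min_def)
      have "m \<in> S"
      proof -
        have "g x \<le> 0" if "x \<in> {a..m}" for x
        proof (cases "x \<le> c")
          case True then show ?thesis using cS that by (auto simp: S_def)
        next
          case False
          then have "\<phi> x \<le> \<phi> c + \<epsilon> * (x - c)" using d m that by auto
          then show ?thesis using gcle by (simp add: g_def algebra_simps)
        qed
        then show ?thesis using m ac by (auto simp: S_def)
      qed
      then have "m \<le> c" unfolding c_def using bdd by (rule cSup_upper)
      then show False using m by auto
    qed
    then have "g b \<le> 0" using gcle by simp
    then show ?thesis by (simp add: g_def)
  qed
  show ?thesis
  proof (rule ccontr)
    assume "\<not> ?thesis"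
    then have gt: "\<phi> b > \<phi> a" by simp
    then have "a < b" using ab by (cases "a = b") auto
    define \<epsilon> where "\<epsilon> = (\<phi> b - \<phi> a) / (2 * (b - a))"
    have "\<epsilon> > 0" using gt \<open>a<b\<close> by (simp add: \<epsilon>_def)
    have "\<epsilon> * (b - a) = (\<phi> b - \<phi> a)/2" using \<open>a<b\<close> by (simp add: \<epsilon>_def field_simps)
    with main[OF \<open>\<epsilon> > 0\<close>] have "\<phi> b \<le> \<phi> a + (\<phi> b - \<phi> a)/2" by simp
    then show False using gt by (simp add: field_simps)
  qed
qed

lemma key_ineq:
  fixes U e1 e2 a :: "'a::real_inner"
  assumes h: "h > 0" and p: "p > 0" and L: "L \<ge> 0"
    and mon: "inner a (U + e1) \<ge> 0" and lip: "norm a \<le> L * norm (U + e1)"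
  shows "(norm (U - h *\<^sub>R (U /\<^sub>R p + e2 + a)))^2 \<le> (1 - 2*h/p) * (norm U)^2
     + h * (2*(norm e2 * norm U + L*norm(U+e1)*norm e1) + h*(norm U/p + norm e2 + L*norm(U+e1))^2)"
proof -
  define v where "v = U /\<^sub>R p + e2 + a"
  have eq: "(norm (U - h *\<^sub>R v))^2 = (norm U)^2 - 2*h*inner U v + h^2 * (norm v)^2"
    unfolding power2_norm_eq_inner by (simp add: inner_diff_left inner_diff_right inner_commute power2_eq_square algebra_simps)
  have iUv: "inner U v = (norm U)^2/p + inner U e2 + inner U a"
    by (simp add: v_def inner_add_right power2_norm_eq_inner divide_inverse mult.commute)
  have "inner U a = inner a (U + e1) - inner a e1" by (simp add: inner_add_right inner_commute)
  moreover have "inner a e1 \<le> norm a * norm e1" by (rule norm_cauchy_schwarz)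
  moreover have "norm a * norm e1 \<le> L * norm (U+e1) * norm e1" using lip by (simp add: mult_right_mono)
  ultimately have ia: "inner U a \<ge> - (L * norm (U+e1) * norm e1)" using mon by linarith
  have ie: "inner U e2 \<ge> - (norm e2 * norm U)"
    using norm_cauchy_schwarz[of "-U" e2] by (simp add: mult.commute)
  have nv: "norm v \<le> norm U/p + norm e2 + L*norm(U+e1)"
  proof -
    have "norm v \<le> norm (U /\<^sub>R p) + norm e2 + norm a" unfolding v_def
      by (meson add_mono norm_triangle_ineq order_trans order_refl)
    then show ?thesis using lip p by (simp add: divide_inverse mult.commute)
  qed
  have nv2: "(norm v)^2 \<le> (norm U/p + norm e2 + L*norm(U+e1))^2"
    by (rule power_mono[OF nv]) simp
  have "(norm (U - h *\<^sub>R v))^2 \<le> (norm U)^2 - 2*h*((norm U)^2/p - norm e2 * norm U - L * norm (U+e1) * norm e1) + h^2 * (norm U/p + norm e2 + L*norm(U+e1))^2"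
    unfolding eq iUv using ia ie nv2 h
    by (smt (verit, best) mult_left_mono mult_pos_pos zero_less_power)
  also have "\<dots> = (1 - 2*h/p) * (norm U)^2
     + h * (2*(norm e2 * norm U + L*norm(U+e1)*norm e1) + h*(norm U/p + norm e2 + L*norm(U+e1))^2)"
    by (simp add: algebra_simps power2_eq_square)
  finally show ?thesis by (simp add: v_def)
qed

theorem lemmaH3:
  fixes A :: "'a::euclidean_space \<Rightarrow> 'a"
    and X Z X' Z' :: "real \<Rightarrow> 'a"
    and T :: real and X0 :: 'a
  assumes lip: "\<exists>L. lipschitz_on L UNIV A"
    and mono: "monotone_op A"
    and T_pos: "T > 0"
    and X_deriv: "\<forall>t\<in>{0..<T}. (X has_vector_derivative X' t) (at t within {0..<T})"
    and Z_deriv: "\<forall>t\<in>{0..<T}. (Z has_vector_derivative Z' t) (at t within {0..<T})"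
    and X'_cont: "continuous_on {0..<T} X'"
    and Z'_cont: "continuous_on {0..<T} Z'"
    and ode_X: "\<forall>t\<in>{0..<T}. X' t = - Z t - A (X t)"
    and ode_Z: "\<forall>t\<in>{0..<T}. Z' t = - (1 / (T - t)) *\<^sub>R Z t - (1 / (T - t)) *\<^sub>R A (X t)"
    and init_X: "X 0 = X0"
    and init_Z: "Z 0 = 0"
  shows "(\<forall>s t. 0 \<le> s \<and> s \<le> t \<and> t < T \<longrightarrow>
            (1 / (T - t)^2) * (norm (X' t))^2 \<le> (1 / (T - s)^2) * (norm (X' s))^2)
         \<and> (\<forall>t\<in>{0..<T}. (norm (Z' t))^2 = (1 / (T - t)^2) * (norm (X' t))^2
                        \<and> (1 / (T - t)^2) * (norm (X' t))^2 \<le> (1 / T^2) * (norm (A X0))^2)"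
proof -
  obtain L where L: "lipschitz_on L UNIV A" using lip by blast
  have L0: "L \<ge> 0" using L by (rule lipschitz_on_nonneg)
  define \<phi> where "\<phi> t = (1 / (T - t)^2) * (norm (X' t))^2" for t
  have ZX: "Z' t = (1 / (T - t)) *\<^sub>R X' t" if "t \<in> {0..<T}" for t
  proof -
    have a: "X' t = - Z t - A (X t)" using ode_X that by blast
    have b: "Z' t = - (1 / (T - t)) *\<^sub>R Z t - (1 / (T - t)) *\<^sub>R A (X t)" using ode_Z that by blast
    show ?thesis unfolding a b by (simp only: scaleR_diff_right scaleR_minus_right scaleR_minus_left)
  qed
  have phicont: "continuous_on {0..<T} \<phi>"
    unfolding \<phi>_def by (intro continuous_intros X'_cont) auto
  have dini: "eventually (\<lambda>x. \<phi> x \<le> \<phi> r + \<epsilon> * (x - r)) (at_right r)"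
    if r: "r \<in> {0..<T}" and e: "\<epsilon> > 0" for r \<epsilon>
  proof -
    define p where "p = T - r"
    have p: "p > 0" using r by (simp add: p_def)
    define U where "U = X' r"
    define e1 where "e1 x = (1/(x-r)) *\<^sub>R (X x - X r) - U" for x
    define e2 where "e2 x = (1/(x-r)) *\<^sub>R (Z x - Z r) - Z' r" for x
    define a where "a x = (1/(x-r)) *\<^sub>R (A (X x) - A (X r))" for x
    define E where "E x = 2*(norm (e2 x) * norm U + L*norm(U+e1 x)*norm (e1 x)) + (x-r)*(norm U/p + norm (e2 x) + L*norm(U+e1 x))^2" for x
    have F: "at_right r \<le> at r within {0..<T}" using r by (intro at_right_le) auto
    have evr: "eventually (\<lambda>x. x > r) (at_right r)" by (simp add: eventually_at_right_less)
    have e1lim: "(e1 \<longlongrightarrow> 0) (at_right r)"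
    proof -
      have "(X has_derivative (\<lambda>h. h *\<^sub>R X' r)) (at r within {0..<T})"
        using X_deriv r by (simp add: has_vector_derivative_def)
      then have "((\<lambda>y. (1 / norm(y - r)) *\<^sub>R (X y - (X r + (y - r) *\<^sub>R X' r))) \<longlongrightarrow> 0) (at r within {0..<T})"
        by (simp add: has_derivative_within)
      then have "((\<lambda>y. (1 / norm(y - r)) *\<^sub>R (X y - (X r + (y - r) *\<^sub>R X' r))) \<longlongrightarrow> 0) (at_right r)"
        using F by (rule tendsto_mono[rotated])
      then show ?thesis
      proof (rule tendsto_cong[THEN iffD1, rotated])
        show "\<forall>\<^sub>F x in at_right r. (1 / norm(x - r)) *\<^sub>R (X x - (X r + (x - r) *\<^sub>R X' r)) = e1 x"
          using evr by eventually_elim (simp add: e1_def U_def scaleR_diff_right diff_diff_eq[symmetric])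
      qed
    qed
    have e2lim: "(e2 \<longlongrightarrow> 0) (at_right r)"
    proof -
      have "(Z has_derivative (\<lambda>h. h *\<^sub>R Z' r)) (at r within {0..<T})"
        using Z_deriv r by (simp add: has_vector_derivative_def)
      then have "((\<lambda>y. (1 / norm(y - r)) *\<^sub>R (Z y - (Z r + (y - r) *\<^sub>R Z' r))) \<longlongrightarrow> 0) (at r within {0..<T})"
        by (simp add: has_derivative_within)
      then have "((\<lambda>y. (1 / norm(y - r)) *\<^sub>R (Z y - (Z r + (y - r) *\<^sub>R Z' r))) \<longlongrightarrow> 0) (at_right r)"
        using F by (rule tendsto_mono[rotated])
      then show ?thesis
      proof (rule tendsto_cong[THEN iffD1, rotated])
        show "\<forall>\<^sub>F x in at_right r. (1 / norm(x - r)) *\<^sub>R (Z x - (Z r + (x - r) *\<^sub>R Z' r)) = e2 x"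
          using evr by eventually_elim (simp add: e2_def scaleR_diff_right diff_diff_eq[symmetric])
      qed
    qed
    have hlim: "((\<lambda>x. x - r) \<longlongrightarrow> 0) (at_right r)"
      using tendsto_diff[OF tendsto_ident_at[of r "{r<..}"] tendsto_const[of r]] by simp
    have Elim0: "(E \<longlongrightarrow> 2*(norm (0::'a) * norm U + L*norm(U+0)*norm (0::'a)) + 0*(norm U/p + norm (0::'a) + L*norm(U+0))^2) (at_right r)"
      unfolding E_def by (intro tendsto_intros e1lim e2lim hlim)
    have Elim: "((\<lambda>x. E x / (T - x)^2) \<longlongrightarrow> 0 / (T - r)^2) (at_right r)"
      using Elim0 p unfolding p_def by (intro tendsto_intros) auto
    have ev1: "eventually (\<lambda>x. E x / (T - x)^2 < \<epsilon>) (at_right r)"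
      using order_tendstoD(2)[OF Elim] e by simp
    have ev2: "eventually (\<lambda>x. x < T) (at_right r)"
      using order_tendstoD(2)[OF tendsto_ident_at[of r "{r<..}"]] r by auto
    show ?thesis using ev1 ev2 evr
    proof eventually_elim
      case (elim x)
      define h where "h = x - r"
      have h: "h > 0" using elim by (simp add: h_def)
      have x: "x \<in> {0..<T}" using elim r by auto
      have ZR: "Z' r = U /\<^sub>R p" using ZX[OF r] by (simp add: U_def p_def divide_inverse)
      have XR: "X' r = - Z r - A (X r)" using ode_X r by auto
      have XX: "X' x = - Z x - A (X x)" using ode_X x by auto
      have eqX: "X' x = U - h *\<^sub>R (U /\<^sub>R p + e2 x + a x)"
        using h unfolding XX e2_def a_def ZR[symmetric] h_def
        by (simp add: U_def XR scaleR_diff_right algebra_simps)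
      have dX: "U + e1 x = (1/h) *\<^sub>R (X x - X r)" by (simp add: e1_def h_def)
      have mon: "inner (a x) (U + e1 x) \<ge> 0"
      proof -
        have "inner (A (X x) - A (X r)) (X x - X r) \<ge> 0" using mono by (simp add: monotone_op_def)
        then show ?thesis unfolding dX a_def h_def[symmetric] by simp
      qed
      have lipa: "norm (a x) \<le> L * norm (U + e1 x)"
      proof -
        have "dist (A (X x)) (A (X r)) \<le> L * dist (X x) (X r)" using lipschitz_onD[OF L] by simp
        then have "(1/h) * norm (A (X x) - A (X r)) \<le> (1/h) * (L * norm (X x - X r))"
          using h by (simp add: dist_norm divide_right_mono)
        then show ?thesis unfolding dX a_def h_def[symmetric] using h by simp
      qed
      have E_eq: "E x = 2*(norm (e2 x) * norm U + L*norm(U+e1 x)*norm (e1 x)) + h*(norm U/p + norm (e2 x) + L*norm(U+e1 x))^2"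
        by (simp add: E_def h_def)
      have key: "(norm (X' x))^2 \<le> (1 - 2*h/p) * (norm U)^2 + h * E x"
        unfolding eqX E_eq by (rule key_ineq[OF h p L0 mon lipa])
      define q where "q = T - x"
      have q: "q > 0" "q = p - h" using elim by (auto simp: q_def p_def h_def)
      have "\<phi> x = (norm (X' x))^2 / q^2" by (simp add: \<phi>_def q_def)
      also have "\<dots> \<le> ((1 - 2*h/p) * (norm U)^2 + h * E x) / q^2"
        using key q by (simp add: divide_right_mono)
      also have "\<dots> = (1 - 2*h/p) * (norm U)^2 / q^2 + h * (E x / q^2)" by (simp add: add_divide_distrib)
      also have "(1 - 2*h/p) * (norm U)^2 / q^2 \<le> (norm U)^2 / p^2"
      proof -
        have "(1 - 2*h/p) = (q^2 - h^2) / p^2" using p unfolding q(2) by (simp add: field_simps power2_eq_square)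
        then have "(1 - 2*h/p) * (norm U)^2 / q^2 = ((q^2 - h^2) / p^2) * (norm U)^2 / q^2" by simp
        also have "\<dots> = (norm U)^2 / p^2 - h^2 * (norm U)^2 / (p^2 * q^2)"
          using q(1) p by (simp add: field_simps power2_eq_square)
        also have "\<dots> \<le> (norm U)^2 / p^2" by simp
        finally show ?thesis .
      qed
      also have "h * (E x / q^2) \<le> h * \<epsilon>" using elim h unfolding q_def by (intro mult_left_mono) auto
      finally show ?case by (simp add: \<phi>_def U_def p_def h_def mult.commute)
    qed
  qed
  have monoT: "\<phi> t \<le> \<phi> s" if "0 \<le> s" "s \<le> t" "t < T" for s t
  proof (rule dini_mono[OF that(2)])
    show "continuous_on {s..t} \<phi>" using phicont by (rule continuous_on_subset) (use that in auto)
    show "\<forall>r\<in>{s..<t}. \<forall>\<epsilon>>0. eventually (\<lambda>x. \<phi> x \<le> \<phi> r + \<epsilon> * (x - r)) (at_right r)"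
      using dini that by auto
  qed
  have phi0: "\<phi> 0 = (1 / T^2) * (norm (A X0))^2"
    using ode_X T_pos by (simp add: \<phi>_def init_Z init_X)
  show ?thesis
  proof (intro conjI allI impI ballI)
    fix s t assume "0 \<le> s \<and> s \<le> t \<and> t < T"
    then show "(1 / (T - t)^2) * (norm (X' t))^2 \<le> (1 / (T - s)^2) * (norm (X' s))^2"
      using monoT unfolding \<phi>_def by blast
  next
    fix t assume t: "t \<in> {0..<T}"
    show "(norm (Z' t))^2 = (1 / (T - t)^2) * (norm (X' t))^2"
      using ZX[OF t] by (simp add: power_mult_distrib power_divide)
    show "(1 / (T - t)^2) * (norm (X' t))^2 \<le> (1 / T^2) * (norm (A X0))^2"
      using monoT[of 0 t] t phi0 unfolding \<phi>_def by auto
  qed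
qed

end
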